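(* Let $\langle A, \leq, \otimes, \mathbf{1}\rangle$ be a finitely distributive semi-lattice monoid (respectively, a distributive complete lattice monoid), with bottom element $\bot$. For $k\geq1$ let $Lex_k(A)$, $\leq_k$, $\otimes^k$, $\mathbf{1}^k$ be defined by: $Lex_1(A) = A$, $Lex_{k+1}(A) = I(A)\, Lex_k(A) \cup C(A)\{\bot\}^k$; $\leq_1=\leq$ and for $k\geq2$, $a_1 \ldots a_k \leq_k b_1 \ldots b_k$ iff $a_1 < b_1$, or $a_1 = b_1$ and $a_2 \ldots a_k \leq_{k-1} b_2 \ldots b_k$; $\otimes^k$ is componentwise and $\mathbf{1}^k=\mathbf{1}\ldots\mathbf{1}$. Then for every $k\geq1$, $\langle Lex_k(A), \leq_k, \otimes^k, \mathbf{1}^k\rangle$ is a finitely distributive semi-lattice monoid (respectively, a distributive complete lattice monoid).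
   Context: A semi-lattice monoid (SLM) is $\langle A,\leq,\otimes,\mathbf{1}\rangle$ where $\langle A,\otimes,\mathbf{1}\rangle$ is a commutative monoid and $\langle A,\leq\rangle$ is a partial order in which every finite subset (including $\emptyset$, whose LUB is the bottom $\bot$) has a least upper bound $\bigvee X$; a complete lattice monoid (CLM) is the same with every subset having a LUB. An SLM is finitely distributive if $a\otimes\bigvee X=\bigvee\{a\otimes x\mid x\in X\}$ for all $a\in A$ and finite $X\subseteq A$; a CLM is distributive if this holds for all $X\subseteq A$. $a<b$ means $a\leq b$, $a\neq b$. $I(A) = \{c \in A \mid \forall a,b \in A.\ a \otimes c = b \otimes c \Rightarrow a = b\}$, $C(A)=A\setminus I(A)$. For sets of sequences, $XY$ denotes concatenations, and $\{\bot\}^k$ is the singleton of the sequence of $k$ copies of $\bot$. *)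

theory Defs
  imports Main
begin

definition is_lub :: "'a set \<Rightarrow> ('a \<Rightarrow> 'a \<Rightarrow> bool) \<Rightarrow> 'a set \<Rightarrow> 'a \<Rightarrow> bool" where
  "is_lub S le X u \<longleftrightarrow> u \<in> S \<and> (\<forall>x\<in>X. le x u) \<and> (\<forall>y\<in>S. (\<forall>x\<in>X. le x y) \<longrightarrow> le u y)"

definition lub :: "'a set \<Rightarrow> ('a \<Rightarrow> 'a \<Rightarrow> bool) \<Rightarrow> 'a set \<Rightarrow> 'a" where
  "lub S le X = (THE u. is_lub S le X u)"

definition bot_of :: "'a set \<Rightarrow> ('a \<Rightarrow> 'a \<Rightarrow> bool) \<Rightarrow> 'a" where
  "bot_of S le = lub S le {}"

definition comm_monoid_on :: "'a set \<Rightarrow> ('a \<Rightarrow> 'a \<Rightarrow> 'a) \<Rightarrow> 'a \<Rightarrow> bool" where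
  "comm_monoid_on S mult one \<longleftrightarrow> one \<in> S \<and> (\<forall>a\<in>S. \<forall>b\<in>S. mult a b \<in> S)
    \<and> (\<forall>a\<in>S. \<forall>b\<in>S. \<forall>c\<in>S. mult (mult a b) c = mult a (mult b c))
    \<and> (\<forall>a\<in>S. \<forall>b\<in>S. mult a b = mult b a)
    \<and> (\<forall>a\<in>S. mult a one = a)"

definition partial_order_on' :: "'a set \<Rightarrow> ('a \<Rightarrow> 'a \<Rightarrow> bool) \<Rightarrow> bool" where
  "partial_order_on' S le \<longleftrightarrow> (\<forall>a\<in>S. le a a)
    \<and> (\<forall>a\<in>S. \<forall>b\<in>S. le a b \<and> le b a \<longrightarrow> a = b)
    \<and> (\<forall>a\<in>S. \<forall>b\<in>S. \<forall>c\<in>S. le a b \<and> le b c \<longrightarrow> le a c)"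

definition SLM :: "'a set \<Rightarrow> ('a \<Rightarrow> 'a \<Rightarrow> bool) \<Rightarrow> ('a \<Rightarrow> 'a \<Rightarrow> 'a) \<Rightarrow> 'a \<Rightarrow> bool" where
  "SLM S le mult one \<longleftrightarrow> comm_monoid_on S mult one \<and> partial_order_on' S le
    \<and> (\<forall>X. finite X \<and> X \<subseteq> S \<longrightarrow> (\<exists>u. is_lub S le X u))"

definition CLM :: "'a set \<Rightarrow> ('a \<Rightarrow> 'a \<Rightarrow> bool) \<Rightarrow> ('a \<Rightarrow> 'a \<Rightarrow> 'a) \<Rightarrow> 'a \<Rightarrow> bool" where
  "CLM S le mult one \<longleftrightarrow> comm_monoid_on S mult one \<and> partial_order_on' S le
    \<and> (\<forall>X. X \<subseteq> S \<longrightarrow> (\<exists>u. is_lub S le X u))"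

definition fin_distrib :: "'a set \<Rightarrow> ('a \<Rightarrow> 'a \<Rightarrow> bool) \<Rightarrow> ('a \<Rightarrow> 'a \<Rightarrow> 'a) \<Rightarrow> bool" where
  "fin_distrib S le mult \<longleftrightarrow>
    (\<forall>a\<in>S. \<forall>X. finite X \<and> X \<subseteq> S \<longrightarrow> mult a (lub S le X) = lub S le ((\<lambda>x. mult a x) ` X))"

definition distrib :: "'a set \<Rightarrow> ('a \<Rightarrow> 'a \<Rightarrow> bool) \<Rightarrow> ('a \<Rightarrow> 'a \<Rightarrow> 'a) \<Rightarrow> bool" where
  "distrib S le mult \<longleftrightarrow>
    (\<forall>a\<in>S. \<forall>X. X \<subseteq> S \<longrightarrow> mult a (lub S le X) = lub S le ((\<lambda>x. mult a x) ` X))"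

definition Icanc :: "'a set \<Rightarrow> ('a \<Rightarrow> 'a \<Rightarrow> 'a) \<Rightarrow> 'a set" where
  "Icanc S mult = {c \<in> S. \<forall>a\<in>S. \<forall>b\<in>S. mult a c = mult b c \<longrightarrow> a = b}"

definition Ccanc :: "'a set \<Rightarrow> ('a \<Rightarrow> 'a \<Rightarrow> 'a) \<Rightarrow> 'a set" where
  "Ccanc S mult = S - Icanc S mult"

text \<open>Sequences of length k are lists of length k. Lex k is only meaningful for k >= 1.\<close>
fun Lex :: "'a set \<Rightarrow> ('a \<Rightarrow> 'a \<Rightarrow> bool) \<Rightarrow> ('a \<Rightarrow> 'a \<Rightarrow> 'a) \<Rightarrow> nat \<Rightarrow> 'a list set" where
  "Lex S le mult 0 = {}"
| "Lex S le mult (Suc 0) = {[a] | a. a \<in> S}"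
| "Lex S le mult (Suc (Suc k)) =
     {c # s | c s. c \<in> Icanc S mult \<and> s \<in> Lex S le mult (Suc k)}
     \<union> {c # replicate (Suc k) (bot_of S le) | c. c \<in> Ccanc S mult}"

fun lex_le :: "('a \<Rightarrow> 'a \<Rightarrow> bool) \<Rightarrow> nat \<Rightarrow> 'a list \<Rightarrow> 'a list \<Rightarrow> bool" where
  "lex_le le 0 xs ys = True"
| "lex_le le (Suc 0) xs ys = le (hd xs) (hd ys)"
| "lex_le le (Suc (Suc k)) xs ys =
     ((le (hd xs) (hd ys) \<and> hd xs \<noteq> hd ys)
      \<or> (hd xs = hd ys \<and> lex_le le (Suc k) (tl xs) (tl ys)))"

definition lex_mult :: "('a \<Rightarrow> 'a \<Rightarrow> 'a) \<Rightarrow> 'a list \<Rightarrow> 'a list \<Rightarrow> 'a list" where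
  "lex_mult mult xs ys = map2 mult xs ys"

end

theory Submission
  imports Defs
begin

lemma lub_unique:
  assumes "partial_order_on' S le" "is_lub S le X u" shows "lub S le X = u"
  unfolding lub_def
proof (rule the_equality)
  show "is_lub S le X u" by fact
  fix v assume v: "is_lub S le X v"
  show "v = u" using assms v unfolding is_lub_def partial_order_on'_def by blast
qed

lemma po_mono: "partial_order_on' S le \<Longrightarrow> T \<subseteq> S \<Longrightarrow> partial_order_on' T le"
  unfolding partial_order_on'_def by blast

lemma lex_refl: "length xs = Suc n \<Longrightarrow> set xs \<subseteq> A \<Longrightarrow> partial_order_on' A le \<Longrightarrow> lex_le le (Suc n) xs xs"
proof (induction n arbitrary: xs)
  case 0 then show ?case by (cases xs) (auto simp: partial_order_on'_def)
next
  case (Suc n) then show ?case by (cases xs) auto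
qed

lemma lex_antisym: "length xs = Suc n \<Longrightarrow> set xs \<subseteq> A \<Longrightarrow> length ys = Suc n \<Longrightarrow> set ys \<subseteq> A \<Longrightarrow>
   partial_order_on' A le \<Longrightarrow> lex_le le (Suc n) xs ys \<Longrightarrow> lex_le le (Suc n) ys xs \<Longrightarrow> xs = ys"
proof (induction n arbitrary: xs ys)
  case 0
  then obtain a b where e: "xs = [a]" "ys = [b]" by (auto simp: length_Suc_conv)
  have po: "\<And>x y. x\<in>A \<Longrightarrow> y\<in>A \<Longrightarrow> le x y \<Longrightarrow> le y x \<Longrightarrow> x = y"
    using 0 unfolding partial_order_on'_def by blast
  show ?case using 0 po[of a b] unfolding e by simp
next
  case (Suc n)
  then obtain a s b t where e: "xs = a#s" "ys = b#t"
    by (auto simp: length_Suc_conv)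
  have po: "\<And>x y. x\<in>A \<Longrightarrow> y\<in>A \<Longrightarrow> le x y \<Longrightarrow> le y x \<Longrightarrow> x = y"
    using Suc.prems(5) unfolding partial_order_on'_def by blast+
  have ab: "a\<in>A" "b\<in>A" "set s \<subseteq> A" "set t \<subseteq> A" "length s = Suc n" "length t = Suc n" using Suc.prems unfolding e by auto
  have h1: "(le a b \<and> a \<noteq> b) \<or> (a = b \<and> lex_le le (Suc n) s t)" using Suc.prems(6) unfolding e by simp
  have h2: "(le b a \<and> b \<noteq> a) \<or> (b = a \<and> lex_le le (Suc n) t s)" using Suc.prems(7) unfolding e by simp
  have "a = b" using h1 h2 po[OF ab(1,2)] by blast
  then show ?case using h1 h2 Suc.IH[OF ab(5,3,6,4) Suc.prems(5)] unfolding e by blast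
qed

lemma lex_trans: "length xs = Suc n \<Longrightarrow> set xs \<subseteq> A \<Longrightarrow> length ys = Suc n \<Longrightarrow> set ys \<subseteq> A \<Longrightarrow>
   length zs = Suc n \<Longrightarrow> set zs \<subseteq> A \<Longrightarrow>
   partial_order_on' A le \<Longrightarrow> lex_le le (Suc n) xs ys \<Longrightarrow> lex_le le (Suc n) ys zs \<Longrightarrow> lex_le le (Suc n) xs zs"
proof (induction n arbitrary: xs ys zs)
  case 0
  then obtain a b c where e: "xs = [a]" "ys = [b]" "zs = [c]" by (auto simp: length_Suc_conv)
  have po: "\<And>x y z. x\<in>A \<Longrightarrow> y\<in>A \<Longrightarrow> z\<in>A \<Longrightarrow> le x y \<Longrightarrow> le y z \<Longrightarrow> le x z"
    using 0 unfolding partial_order_on'_def by blast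
  show ?case using 0 po[of a b c] unfolding e by simp
next
  case (Suc n)
  then obtain a s b t c u where e: "xs = a#s" "ys = b#t" "zs = c#u"
    by (auto simp: length_Suc_conv)
  have po: "\<And>x y z. x\<in>A \<Longrightarrow> y\<in>A \<Longrightarrow> z\<in>A \<Longrightarrow> le x y \<Longrightarrow> le y z \<Longrightarrow> le x z"
    "\<And>x y. x\<in>A \<Longrightarrow> y\<in>A \<Longrightarrow> le x y \<Longrightarrow> le y x \<Longrightarrow> x = y"
    using Suc.prems(7) unfolding partial_order_on'_def by blast+
  have ab: "a\<in>A" "b\<in>A" "c\<in>A" "set s \<subseteq> A" "set t \<subseteq> A" "set u \<subseteq> A" "length s = Suc n" "length t = Suc n" "length u = Suc n" using Suc.prems unfolding e by auto
  have h1: "(le a b \<and> a \<noteq> b) \<or> (a = b \<and> lex_le le (Suc n) s t)" using Suc.prems(8) unfolding e by simp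
  have h2: "(le b c \<and> b \<noteq> c) \<or> (b = c \<and> lex_le le (Suc n) t u)" using Suc.prems(9) unfolding e by simp
  have IH: "lex_le le (Suc n) s t \<Longrightarrow> lex_le le (Suc n) t u \<Longrightarrow> lex_le le (Suc n) s u"
    using Suc.IH[OF ab(7,4,8,5,9,6) Suc.prems(7)] .
  have "(le a c \<and> a \<noteq> c) \<or> (a = c \<and> lex_le le (Suc n) s u)"
    using h1 h2 IH po(1)[OF ab(1,2,3)] po(2)[OF ab(1,2)] po(2)[OF ab(2,3)] by blast
  then show ?case unfolding e by simp
qed

lemma lex_po: assumes "partial_order_on' A le"
  shows "partial_order_on' {xs. length xs = Suc n \<and> set xs \<subseteq> A} (lex_le le (Suc n))"
  unfolding partial_order_on'_def mem_Collect_eq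
  using lex_refl[OF _ _ assms] lex_antisym[OF _ _ _ _ assms] lex_trans[OF _ _ _ _ _ _ assms] by blast

lemma lm_cons[simp]: "lex_mult mult (a#s) (b#t) = mult a b # lex_mult mult s t"
  by (simp add: lex_mult_def)
lemma lm_Nil[simp]: "lex_mult mult [] t = []" "lex_mult mult s [] = []"
  by (simp_all add: lex_mult_def)

lemma lm_len[simp]: "length (lex_mult mult s t) = min (length s) (length t)"
  by (simp add: lex_mult_def)

lemma lm_set: "comm_monoid_on A mult one \<Longrightarrow> set s \<subseteq> A \<Longrightarrow> set t \<subseteq> A \<Longrightarrow> set (lex_mult mult s t) \<subseteq> A"
proof (induction s arbitrary: t)
  case Nil then show ?case by simp
next
  case (Cons a s) from Cons.prems Cons.IH[of "tl t"] show ?case by (cases t) (auto simp: comm_monoid_on_def)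
qed

lemma lm_comm: "comm_monoid_on A mult one \<Longrightarrow> set s \<subseteq> A \<Longrightarrow> set t \<subseteq> A \<Longrightarrow> lex_mult mult s t = lex_mult mult t s"
proof (induction s arbitrary: t)
  case Nil then show ?case by simp
next
  case (Cons a s) then show ?case by (cases t) (auto simp: comm_monoid_on_def)
qed

lemma lm_assoc: "comm_monoid_on A mult one \<Longrightarrow> set s \<subseteq> A \<Longrightarrow> set t \<subseteq> A \<Longrightarrow> set u \<subseteq> A \<Longrightarrow>
   lex_mult mult (lex_mult mult s t) u = lex_mult mult s (lex_mult mult t u)"
proof (induction s arbitrary: t u)
  case Nil then show ?case by simp
next
  case (Cons a s) then show ?case by (cases t; cases u) (auto simp: comm_monoid_on_def)
qed

lemma lm_unit: "comm_monoid_on A mult one \<Longrightarrow> set s \<subseteq> A \<Longrightarrow> lex_mult mult s (replicate (length s) one) = s"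
  by (induction s) (auto simp: comm_monoid_on_def)

lemma lm_bot: "(\<And>x. x \<in> set s \<Longrightarrow> mult x b = b) \<Longrightarrow> lex_mult mult s (replicate (length s) b) = replicate (length s) b"
  by (induction s) auto

lemma cm_lists:
  assumes "comm_monoid_on A mult one" "S \<subseteq> {xs. length xs = n \<and> set xs \<subseteq> A}"
    "\<forall>x\<in>S. \<forall>y\<in>S. lex_mult mult x y \<in> S" "replicate n one \<in> S"
  shows "comm_monoid_on S (lex_mult mult) (replicate n one)"
  unfolding comm_monoid_on_def
proof (intro conjI ballI)
  fix a b c assume "a\<in>S" "b\<in>S" "c\<in>S"
  then show "lex_mult mult (lex_mult mult a b) c = lex_mult mult a (lex_mult mult b c)"
    using lm_assoc[OF assms(1)] assms(2) by blast
next
  fix a b assume "a\<in>S" "b\<in>S"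
  then show "lex_mult mult a b = lex_mult mult b a"
    using lm_comm[OF assms(1)] assms(2) by blast
next
  fix a assume "a\<in>S"
  then show "lex_mult mult a (replicate n one) = a"
    using lm_unit[OF assms(1)] assms(2) by force
qed (use assms in auto)


locale base =
  fixes A :: "'a set" and le :: "'a \<Rightarrow> 'a \<Rightarrow> bool" and mult :: "'a \<Rightarrow> 'a \<Rightarrow> 'a"
    and one :: 'a and fin :: bool
  assumes po: "partial_order_on' A le"
    and cm: "comm_monoid_on A mult one"
    and lubex: "\<And>X. (fin \<longrightarrow> finite X) \<Longrightarrow> X \<subseteq> A \<Longrightarrow> \<exists>u. is_lub A le X u"
    and distr: "\<And>a X. a \<in> A \<Longrightarrow> (fin \<longrightarrow> finite X) \<Longrightarrow> X \<subseteq> A \<Longrightarrow>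
        mult a (lub A le X) = lub A le (mult a ` X)"
begin

abbreviation "Bt \<equiv> bot_of A le"
abbreviation "Ic \<equiv> Icanc A mult"

lemma mult_in: "a \<in> A \<Longrightarrow> b \<in> A \<Longrightarrow> mult a b \<in> A"
  using cm unfolding comm_monoid_on_def by blast
lemma mult_comm: "a \<in> A \<Longrightarrow> b \<in> A \<Longrightarrow> mult a b = mult b a"
  using cm unfolding comm_monoid_on_def by blast
lemma mult_assoc: "a \<in> A \<Longrightarrow> b \<in> A \<Longrightarrow> c \<in> A \<Longrightarrow> mult (mult a b) c = mult a (mult b c)"
  using cm unfolding comm_monoid_on_def by blast
lemma one_in: "one \<in> A" and mult_one: "a \<in> A \<Longrightarrow> mult a one = a"
  using cm unfolding comm_monoid_on_def by blast+

lemma lub_is: "(fin \<longrightarrow> finite X) \<Longrightarrow> X \<subseteq> A \<Longrightarrow> is_lub A le X (lub A le X)"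
  using lubex lub_unique[OF po] by metis

lemma lub_in: "(fin \<longrightarrow> finite X) \<Longrightarrow> X \<subseteq> A \<Longrightarrow> lub A le X \<in> A"
  using lub_is unfolding is_lub_def by blast

lemma bot_in: "Bt \<in> A"
  unfolding bot_of_def using lub_in by blast

lemma mult_bot: "x \<in> A \<Longrightarrow> mult x Bt = Bt"
  unfolding bot_of_def using distr[of x "{}"] by simp

lemma one_I: "one \<in> Ic"
  unfolding Icanc_def using one_in mult_one by auto

lemma I_sub: "Ic \<subseteq> A" unfolding Icanc_def by auto
lemma I_in: "c \<in> Ic \<Longrightarrow> c \<in> A" unfolding Icanc_def by auto
lemma C_iff: "c \<in> Ccanc A mult \<longleftrightarrow> c \<in> A \<and> c \<notin> Ic" unfolding Ccanc_def by auto

lemma I_mult: "c \<in> Ic \<Longrightarrow> d \<in> Ic \<Longrightarrow> mult c d \<in> Ic"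
  unfolding Icanc_def
proof (clarsimp, intro conjI mult_in ballI impI)
  fix a b assume c: "c \<in> A" "\<forall>a\<in>A. \<forall>b\<in>A. mult a c = mult b c \<longrightarrow> a = b"
    and d: "d \<in> A" "\<forall>a\<in>A. \<forall>b\<in>A. mult a d = mult b d \<longrightarrow> a = b"
    and ab: "a \<in> A" "b \<in> A" "mult a (mult c d) = mult b (mult c d)"
  have "mult (mult a c) d = mult (mult b c) d" using ab c d mult_assoc by simp
  then have "mult a c = mult b c" using d ab c mult_in by blast
  then show "a = b" using c ab by blast
qed

lemma I_canc: "c \<in> Ic \<Longrightarrow> x \<in> A \<Longrightarrow> y \<in> A \<Longrightarrow> mult c x = mult c y \<Longrightarrow> x = y"
  unfolding Icanc_def using mult_comm by auto

lemma I_prod: "c \<in> A \<Longrightarrow> d \<in> A \<Longrightarrow> mult c d \<in> Ic \<Longrightarrow> c \<in> Ic"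
  unfolding Icanc_def
proof (clarsimp)
  fix a b assume c: "c \<in> A" "d \<in> A" and h: "\<forall>a\<in>A. \<forall>b\<in>A. mult a (mult c d) = mult b (mult c d) \<longrightarrow> a = b"
    and ab: "a \<in> A" "b \<in> A" "mult a c = mult b c"
  have "mult a (mult c d) = mult b (mult c d)" using ab c mult_assoc by metis
  then show "a = b" using h ab by blast
qed

lemma Lex_len: "xs \<in> Lex A le mult (Suc n) \<Longrightarrow> length xs = Suc n \<and> set xs \<subseteq> A"
proof (induction n arbitrary: xs)
  case 0 then show ?case by auto
next
  case (Suc n) then show ?case using I_in bot_in by (auto simp: C_iff) blast
qed

lemma rep_bot: "replicate (Suc n) Bt \<in> Lex A le mult (Suc n)"
proof (induction n)
  case 0 then show ?case using bot_in by auto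
next
  case (Suc n)
  show ?case
  proof (cases "Bt \<in> Ic")
    case True then show ?thesis using Suc by auto
  next
    case False then show ?thesis using bot_in by (auto simp: C_iff)
  qed
qed

lemma rep_one: "replicate (Suc n) one \<in> Lex A le mult (Suc n)"
  by (induction n) (use one_I one_in in auto)

lemma Lex_char: "xs \<in> Lex A le mult (Suc (Suc n)) \<longleftrightarrow>
   (\<exists>c s. xs = c # s \<and> c \<in> A \<and> s \<in> Lex A le mult (Suc n) \<and> (c \<notin> Ic \<longrightarrow> s = replicate (Suc n) Bt))"
  using I_in rep_bot[of n] by (auto simp: C_iff)


abbreviation "LL n \<equiv> Lex A le mult n"
abbreviation "LE n \<equiv> lex_le le n"
abbreviation "LM \<equiv> lex_mult mult"

lemma Lex_po: "partial_order_on' (LL (Suc n)) (LE (Suc n))"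
  using po_mono[OF lex_po[OF po, of n]] Lex_len by blast

lemma reflA: "a \<in> A \<Longrightarrow> le a a" using po unfolding partial_order_on'_def by blast

lemma hd_lm: "s \<noteq> [] \<Longrightarrow> t \<noteq> [] \<Longrightarrow> hd (LM s t) = mult (hd s) (hd t)"
  by (cases s; cases t) auto

lemma base_case:
  "(\<forall>x\<in>LL (Suc 0). \<forall>y\<in>LL (Suc 0). LM x y \<in> LL (Suc 0)) \<and>
   (\<forall>X. (fin \<longrightarrow> finite X) \<and> X \<subseteq> LL (Suc 0) \<longrightarrow> is_lub (LL (Suc 0)) (LE (Suc 0)) X (lub (LL (Suc 0)) (LE (Suc 0)) X)) \<and>
   (\<forall>a\<in>LL (Suc 0). \<forall>X. (fin \<longrightarrow> finite X) \<and> X \<subseteq> LL (Suc 0) \<longrightarrow>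
      LM a (lub (LL (Suc 0)) (LE (Suc 0)) X) = lub (LL (Suc 0)) (LE (Suc 0)) (LM a ` X)) \<and>
   lub (LL (Suc 0)) (LE (Suc 0)) {} = replicate (Suc 0) Bt"
proof -
  have L1: "LL (Suc 0) = {[a] | a. a \<in> A}" by simp
  have key: "is_lub (LL (Suc 0)) (LE (Suc 0)) X [lub A le (hd ` X)]"
    if fX: "fin \<longrightarrow> finite X" and XL: "X \<subseteq> LL (Suc 0)" for X
  proof -
    have hX: "hd ` X \<subseteq> A" using XL by auto
    have H: "is_lub A le (hd ` X) (lub A le (hd ` X))" using lub_is[OF _ hX] fX by auto
    show ?thesis using H unfolding is_lub_def L1 by auto
  qed
  have eq: "lub (LL (Suc 0)) (LE (Suc 0)) X = [lub A le (hd ` X)]"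
    if fX: "fin \<longrightarrow> finite X" and XL: "X \<subseteq> LL (Suc 0)" for X
    using lub_unique[OF Lex_po key[OF fX XL]] .
  have c1: "\<forall>x\<in>LL (Suc 0). \<forall>y\<in>LL (Suc 0). LM x y \<in> LL (Suc 0)"
    using mult_in by auto
  have c2: "\<forall>X. (fin \<longrightarrow> finite X) \<and> X \<subseteq> LL (Suc 0) \<longrightarrow> is_lub (LL (Suc 0)) (LE (Suc 0)) X (lub (LL (Suc 0)) (LE (Suc 0)) X)"
    using key eq by metis
  have c3: "LM a (lub (LL (Suc 0)) (LE (Suc 0)) X) = lub (LL (Suc 0)) (LE (Suc 0)) (LM a ` X)"
    if a: "a \<in> LL (Suc 0)" and fX: "fin \<longrightarrow> finite X" and XL: "X \<subseteq> LL (Suc 0)" for a X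
  proof -
    obtain c where ac: "a = [c]" "c \<in> A" using a by auto
    have aXL: "LM a ` X \<subseteq> LL (Suc 0)" using c1 a XL by blast
    have faX: "fin \<longrightarrow> finite (LM a ` X)" using fX by auto
    have hX: "hd ` X \<subseteq> A" using XL by auto
    have img: "hd ` (LM a ` X) = mult c ` (hd ` X)"
    proof -
      have "\<And>x. x \<in> X \<Longrightarrow> hd (LM a x) = mult c (hd x)" using XL ac by auto
      then show ?thesis by (simp add: image_image)
    qed
    show ?thesis unfolding eq[OF fX XL] eq[OF faX aXL] img
      using distr[OF ac(2) _ hX] fX ac by auto
  qed
  have c4: "lub (LL (Suc 0)) (LE (Suc 0)) {} = replicate (Suc 0) Bt"
    using eq[of "{}"] by (simp add: bot_of_def)
  show ?thesis using c1 c2 c3 c4 by blast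
qed


definition "GOOD n \<longleftrightarrow>
  (\<forall>x\<in>LL (Suc n). \<forall>y\<in>LL (Suc n). LM x y \<in> LL (Suc n)) \<and>
   (\<forall>X. (fin \<longrightarrow> finite X) \<and> X \<subseteq> LL (Suc n) \<longrightarrow> is_lub (LL (Suc n)) (LE (Suc n)) X (lub (LL (Suc n)) (LE (Suc n)) X)) \<and>
   (\<forall>a\<in>LL (Suc n). \<forall>X. (fin \<longrightarrow> finite X) \<and> X \<subseteq> LL (Suc n) \<longrightarrow>
      LM a (lub (LL (Suc n)) (LE (Suc n)) X) = lub (LL (Suc n)) (LE (Suc n)) (LM a ` X)) \<and>
   lub (LL (Suc n)) (LE (Suc n)) {} = replicate (Suc n) Bt"

lemma step_case:
  assumes IH: "GOOD n" shows "GOOD (Suc n)"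
proof -
  define L where "L = LL (Suc n)"
  define L' where "L' = LL (Suc (Suc n))"
  define B where "B = replicate (Suc n) Bt"
  have cl: "\<And>x y. x \<in> L \<Longrightarrow> y \<in> L \<Longrightarrow> LM x y \<in> L"
    and lb: "\<And>X. (fin \<longrightarrow> finite X) \<Longrightarrow> X \<subseteq> L \<Longrightarrow> is_lub L (LE (Suc n)) X (lub L (LE (Suc n)) X)"
    and ds: "\<And>a X. a \<in> L \<Longrightarrow> (fin \<longrightarrow> finite X) \<Longrightarrow> X \<subseteq> L \<Longrightarrow>
      LM a (lub L (LE (Suc n)) X) = lub L (LE (Suc n)) (LM a ` X)"
    and bt: "lub L (LE (Suc n)) {} = B"
    using IH unfolding GOOD_def L_def B_def by blast+
  have poL': "partial_order_on' L' (LE (Suc (Suc n)))" unfolding L'_def by (rule Lex_po)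
  have reflL: "\<And>s. s \<in> L \<Longrightarrow> LE (Suc n) s s"
    using Lex_po unfolding partial_order_on'_def L_def by blast
  have BL: "B \<in> L" unfolding B_def L_def by (rule rep_bot)
  have char: "\<And>x. x \<in> L' \<longleftrightarrow> (\<exists>c s. x = c # s \<and> c \<in> A \<and> s \<in> L \<and> (c \<notin> Ic \<longrightarrow> s = B))"
    unfolding L'_def L_def B_def by (rule Lex_char)
  have lmB: "\<And>s. s \<in> L \<Longrightarrow> LM s B = B"
  proof -
    fix s assume "s \<in> L"
    then have "length s = Suc n" "set s \<subseteq> A" using Lex_len unfolding L_def by auto
    then show "LM s B = B" unfolding B_def using lm_bot[of s mult Bt] mult_bot by auto
  qed
  have lmB': "\<And>s. s \<in> L \<Longrightarrow> LM B s = B"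
  proof -
    fix s assume s: "s \<in> L"
    then have "set s \<subseteq> A" "set B \<subseteq> A" using Lex_len BL unfolding L_def by auto
    then show "LM B s = B" using lm_comm[OF cm] lmB[OF s] by metis
  qed
  define ls where "ls X = (if lub A le (hd ` X) \<in> Ic
      then lub A le (hd ` X) # lub L (LE (Suc n)) {t. lub A le (hd ` X) # t \<in> X}
      else lub A le (hd ` X) # B)" for X
  have ls_is: "is_lub L' (LE (Suc (Suc n))) X (ls X)"
    if fX: "fin \<longrightarrow> finite X" and XL: "X \<subseteq> L'" for X
  proof -
    define m where "m = lub A le (hd ` X)"
    have Xc: "\<And>x. x \<in> X \<Longrightarrow> \<exists>c s. x = c # s \<and> c \<in> A \<and> s \<in> L \<and> (c \<notin> Ic \<longrightarrow> s = B)"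
      using XL char by blast
    have hX: "hd ` X \<subseteq> A" using Xc by fastforce
    have mis: "is_lub A le (hd ` X) m" unfolding m_def using lub_is[OF _ hX] fX by auto
    have mA: "m \<in> A" and ub: "\<And>x. x \<in> X \<Longrightarrow> le (hd x) m"
      and least: "\<And>d. d \<in> A \<Longrightarrow> (\<forall>x\<in>X. le (hd x) d) \<Longrightarrow> le m d"
      using mis unfolding is_lub_def by auto
    have extr: "le (hd x) (hd y)" if yL: "y \<in> L'" and xX: "x \<in> X" and h: "LE (Suc (Suc n)) x y" for x y
    proof -
      obtain c s where x: "x = c # s" "c \<in> A" using Xc[OF xX] by blast
      obtain d v where y: "y = d # v" using char yL by blast
      show ?thesis using h reflA[OF x(2)] unfolding x y by auto
    qed
    have ubd: "le m (hd y)" if "y \<in> L'" "\<forall>x\<in>X. LE (Suc (Suc n)) x y" for y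
      using least[of "hd y"] extr that char[of y] by fastforce
    show ?thesis
    proof (cases "m \<in> Ic")
      case True
      define T where "T = {t. m # t \<in> X}"
      have TL: "T \<subseteq> L" unfolding T_def using Xc by fastforce
      have "T \<subseteq> tl ` X" unfolding T_def by force
      then have fT: "fin \<longrightarrow> finite T" using fX finite_subset by blast
      define u where "u = lub L (LE (Suc n)) T"
      have uis: "is_lub L (LE (Suc n)) T u" unfolding u_def using lb fT TL by blast
      have lsX: "ls X = m # u" unfolding ls_def u_def T_def m_def[symmetric] using True by simp
      show ?thesis unfolding lsX is_lub_def
      proof (intro conjI ballI impI)
        show "m # u \<in> L'" using char mA uis True unfolding is_lub_def by blast
      next
        fix x assume xX: "x \<in> X"
        obtain c s where x: "x = c # s" using Xc[OF xX] by blast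
        have "le c m" using ub[OF xX] x by simp
        moreover have "c = m \<Longrightarrow> LE (Suc n) s u" using uis xX x unfolding is_lub_def T_def by auto
        ultimately show "LE (Suc (Suc n)) x (m # u)" unfolding x by auto
      next
        fix y assume yL: "y \<in> L'" and yub: "\<forall>x\<in>X. LE (Suc (Suc n)) x y"
        obtain d v where y: "y = d # v" "v \<in> L" using char yL by blast
        have md: "le m d" using ubd[OF yL yub] y by simp
        have "m = d \<Longrightarrow> LE (Suc n) u v"
        proof -
          assume "m = d"
          then have "\<forall>t\<in>T. LE (Suc n) t v" using yub unfolding T_def y by auto
          then show ?thesis using uis y(2) unfolding is_lub_def by blast
        qed
        then show "LE (Suc (Suc n)) (m # u) y" using md unfolding y by auto
      qed
    next
      case False
      have lsX: "ls X = m # B" unfolding ls_def m_def[symmetric] using False by simp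
      show ?thesis unfolding lsX is_lub_def
      proof (intro conjI ballI impI)
        show "m # B \<in> L'" using char mA BL by blast
      next
        fix x assume xX: "x \<in> X"
        obtain c s where x: "x = c # s" "c \<notin> Ic \<longrightarrow> s = B" using Xc[OF xX] by blast
        have "le c m" using ub[OF xX] x by simp
        moreover have "c = m \<Longrightarrow> LE (Suc n) s B" using x False reflL[OF BL] by auto
        ultimately show "LE (Suc (Suc n)) x (m # B)" unfolding x by auto
      next
        fix y assume yL: "y \<in> L'" and yub: "\<forall>x\<in>X. LE (Suc (Suc n)) x y"
        obtain d v where y: "y = d # v" "d \<notin> Ic \<longrightarrow> v = B" using char yL by blast
        have md: "le m d" using ubd[OF yL yub] y by simp
        have "m = d \<Longrightarrow> LE (Suc n) B v" using y False reflL[OF BL] by auto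
        then show "LE (Suc (Suc n)) (m # B) y" using md unfolding y by auto
      qed
    qed
  qed
  have ls_eq: "lub L' (LE (Suc (Suc n))) X = ls X"
    if fX: "fin \<longrightarrow> finite X" and XL: "X \<subseteq> L'" for X
    using lub_unique[OF poL' ls_is[OF fX XL]] .
  have c1: "LM x y \<in> L'" if xL: "x \<in> L'" and yL: "y \<in> L'" for x y
  proof -
    obtain c s where x: "x = c # s" "c \<in> A" "s \<in> L" "c \<notin> Ic \<longrightarrow> s = B" using char xL by blast
    obtain d t where y: "y = d # t" "d \<in> A" "t \<in> L" "d \<notin> Ic \<longrightarrow> t = B" using char yL by blast
    have "mult c d \<notin> Ic \<longrightarrow> LM s t = B"
      using I_mult x y lmB lmB' by blast
    then show ?thesis unfolding x y using char mult_in[OF x(2) y(2)] cl[OF x(3) y(3)] by auto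
  qed
  have c3: "LM a (lub L' (LE (Suc (Suc n))) X) = lub L' (LE (Suc (Suc n))) (LM a ` X)"
    if aL: "a \<in> L'" and fX: "fin \<longrightarrow> finite X" and XL: "X \<subseteq> L'" for a X
  proof -
    obtain c s where a: "a = c # s" "c \<in> A" "s \<in> L" "c \<notin> Ic \<longrightarrow> s = B" using char aL by blast
    have Xc: "\<And>x. x \<in> X \<Longrightarrow> \<exists>c s. x = c # s \<and> c \<in> A \<and> s \<in> L \<and> (c \<notin> Ic \<longrightarrow> s = B)"
      using XL char by blast
    have hX: "hd ` X \<subseteq> A" using Xc by fastforce
    define m where "m = lub A le (hd ` X)"
    have mA: "m \<in> A" unfolding m_def using lub_in[OF _ hX] fX by auto
    have aXL: "LM a ` X \<subseteq> L'" using c1 aL XL by blast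
    have faX: "fin \<longrightarrow> finite (LM a ` X)" using fX by auto
    have img: "hd ` (LM a ` X) = mult c ` (hd ` X)"
    proof -
      have "\<And>x. x \<in> X \<Longrightarrow> hd (LM a x) = mult c (hd x)" using Xc a by fastforce
      then show ?thesis by (simp add: image_image)
    qed
    have m': "lub A le (hd ` (LM a ` X)) = mult c m"
      unfolding img m_def using distr[OF a(2) _ hX] fX by auto
    have cmA: "mult c m \<in> A" using mult_in a(2) mA by blast
    have rhs: "lub L' (LE (Suc (Suc n))) (LM a ` X) = (if mult c m \<in> Ic
      then mult c m # lub L (LE (Suc n)) {t. mult c m # t \<in> LM a ` X}
      else mult c m # B)"
      unfolding ls_eq[OF faX aXL] ls_def m' ..
    have lhs: "lub L' (LE (Suc (Suc n))) X = ls X" using ls_eq[OF fX XL] .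
    show ?thesis
    proof (cases "c \<in> Ic")
      case cI: True
      show ?thesis
      proof (cases "m \<in> Ic")
        case mI: True
        have cmI: "mult c m \<in> Ic" using I_mult cI mI by blast
        define T where "T = {t. m # t \<in> X}"
        have TL: "T \<subseteq> L" unfolding T_def using Xc by fastforce
        have "T \<subseteq> tl ` X" unfolding T_def by force
        then have fT: "fin \<longrightarrow> finite T" using fX finite_subset by blast
        have Teq: "{t. mult c m # t \<in> LM a ` X} = LM s ` T"
        proof (intro equalityI subsetI)
          fix t assume "t \<in> {t. mult c m # t \<in> LM a ` X}"
          then obtain x where xX: "x \<in> X" and tx: "mult c m # t = LM a x" by auto
          obtain d w where x: "x = d # w" "d \<in> A" using Xc[OF xX] by blast
          have "mult c m = mult c d" "t = LM s w" using tx unfolding x a by auto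
          then have "d = m" using I_canc[OF cI mA x(2)] by simp
          then show "t \<in> LM s ` T" using xX x \<open>t = LM s w\<close> unfolding T_def by auto
        next
          fix t assume "t \<in> LM s ` T"
          then obtain w where "m # w \<in> X" "t = LM s w" unfolding T_def by auto
          then show "t \<in> {t. mult c m # t \<in> LM a ` X}" unfolding a
            by (auto intro!: image_eqI[where x = "m # w"])
        qed
        have lsX: "ls X = m # lub L (LE (Suc n)) T" unfolding ls_def m_def[symmetric] T_def using mI by simp
        show ?thesis unfolding lhs lsX rhs using cmI Teq ds[OF a(3) fT TL] a(1) by simp
      next
        case mI: False
        have cmI: "mult c m \<notin> Ic" using I_prod[OF mA a(2)] mult_comm[OF mA a(2)] mI by auto
        have lsX: "ls X = m # B" unfolding ls_def m_def[symmetric] using mI by simp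
        show ?thesis unfolding lhs lsX rhs using cmI lmB[OF a(3)] a(1) by simp
      qed
    next
      case cI: False
      have cmI: "mult c m \<notin> Ic" using I_prod[OF a(2) mA] cI by auto
      have sB: "s = B" using a cI by blast
      have "ls X \<in> L'" using ls_is[OF fX XL] unfolding is_lub_def by blast
      then obtain d v where lsX: "ls X = d # v" "v \<in> L" using char by blast
      have "d = m" using lsX(1) unfolding ls_def m_def[symmetric] by (auto split: if_splits)
      then show ?thesis unfolding lhs rhs using lsX cmI lmB'[OF lsX(2)] a(1) sB by simp
    qed
  qed
  have c4: "lub L' (LE (Suc (Suc n))) {} = replicate (Suc (Suc n)) Bt"
  proof -
    have "lub A le {} = Bt" by (simp add: bot_of_def)
    then show ?thesis unfolding ls_eq[of "{}", simplified] ls_def using bt unfolding B_def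
      by simp
  qed
  show ?thesis unfolding GOOD_def L'_def[symmetric]
    using c1 ls_is ls_eq c3 c4 by auto
qed

lemma all_good: "GOOD n"
proof (induction n)
  case 0 then show ?case using base_case unfolding GOOD_def by blast
next
  case (Suc n) then show ?case by (rule step_case)
qed


lemma final: "comm_monoid_on (LL (Suc n)) LM (replicate (Suc n) one) \<and> partial_order_on' (LL (Suc n)) (LE (Suc n))
  \<and> (\<forall>X. (fin \<longrightarrow> finite X) \<and> X \<subseteq> LL (Suc n) \<longrightarrow> (\<exists>u. is_lub (LL (Suc n)) (LE (Suc n)) X u))
  \<and> (\<forall>a\<in>LL (Suc n). \<forall>X. (fin \<longrightarrow> finite X) \<and> X \<subseteq> LL (Suc n) \<longrightarrow>
      LM a (lub (LL (Suc n)) (LE (Suc n)) X) = lub (LL (Suc n)) (LE (Suc n)) (LM a ` X))"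
proof -
  have G: "GOOD n" by (rule all_good)
  have cl: "\<forall>x\<in>LL (Suc n). \<forall>y\<in>LL (Suc n). LM x y \<in> LL (Suc n)"
    and lb: "\<forall>X. (fin \<longrightarrow> finite X) \<and> X \<subseteq> LL (Suc n) \<longrightarrow> is_lub (LL (Suc n)) (LE (Suc n)) X (lub (LL (Suc n)) (LE (Suc n)) X)"
    and ds: "\<forall>a\<in>LL (Suc n). \<forall>X. (fin \<longrightarrow> finite X) \<and> X \<subseteq> LL (Suc n) \<longrightarrow>
      LM a (lub (LL (Suc n)) (LE (Suc n)) X) = lub (LL (Suc n)) (LE (Suc n)) (LM a ` X)"
    using G unfolding GOOD_def by (blast dest: conjunct1 conjunct2)+
  have sub: "LL (Suc n) \<subseteq> {xs. length xs = Suc n \<and> set xs \<subseteq> A}" using Lex_len by blast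
  have c: "comm_monoid_on (LL (Suc n)) LM (replicate (Suc n) one)"
    by (rule cm_lists[OF cm sub cl rep_one])
  have ex: "\<forall>X. (fin \<longrightarrow> finite X) \<and> X \<subseteq> LL (Suc n) \<longrightarrow> (\<exists>u. is_lub (LL (Suc n)) (LE (Suc n)) X u)"
    using lb by blast
  show ?thesis using c Lex_po ex ds by (intro conjI)
qed

end

theorem theorem1:
  fixes A :: "'a set" and le :: "'a \<Rightarrow> 'a \<Rightarrow> bool" and mult :: "'a \<Rightarrow> 'a \<Rightarrow> 'a"
    and one :: 'a and k :: nat
  assumes "k \<ge> 1"
  shows "(SLM A le mult one \<and> fin_distrib A le mult \<longrightarrow>
            SLM (Lex A le mult k) (lex_le le k) (lex_mult mult) (replicate k one)
            \<and> fin_distrib (Lex A le mult k) (lex_le le k) (lex_mult mult))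
       \<and> (CLM A le mult one \<and> distrib A le mult \<longrightarrow>
            CLM (Lex A le mult k) (lex_le le k) (lex_mult mult) (replicate k one)
            \<and> distrib (Lex A le mult k) (lex_le le k) (lex_mult mult))"
proof -
  obtain n where k: "k = Suc n" using assms by (cases k) auto
  show ?thesis
  proof (rule conjI; rule impI)
    assume h: "SLM A le mult one \<and> fin_distrib A le mult"
    interpret b: base A le mult one True
      using h unfolding SLM_def fin_distrib_def by unfold_locales simp_all
    show "SLM (Lex A le mult k) (lex_le le k) (lex_mult mult) (replicate k one)
            \<and> fin_distrib (Lex A le mult k) (lex_le le k) (lex_mult mult)"
      using b.final[of n] unfolding k SLM_def fin_distrib_def by simp
  next
    assume h: "CLM A le mult one \<and> distrib A le mult"
    interpret b: base A le mult one False
      using h unfolding CLM_def distrib_def by unfold_locales simp_all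
    show "CLM (Lex A le mult k) (lex_le le k) (lex_mult mult) (replicate k one)
            \<and> distrib (Lex A le mult k) (lex_le le k) (lex_mult mult)"
      using b.final[of n] unfolding k CLM_def distrib_def by simp
  qed
qed

end
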